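(* Let $s,t\in\mathbb{R}$ with $s\ne0$, $t\ne0$, $s^2+4t>0$, and $q=\varphi'_{s,t}/\varphi_{s,t}$. (1) If $\lvert q\rvert<1$, then on the disk of convergence of its series, $\mathrm{Exp}_{s,t}(z)=\prod_{k=0}^\infty\frac{\varphi_{s,t}^{k+1}}{\varphi_{s,t}^{k+1}-(\varphi_{s,t}-\varphi'_{s,t})\varphi_{s,t}'^{\,k}z}$, and this product gives the meromorphic continuation of $\mathrm{Exp}_{s,t}$ to $\mathbb{C}$. (2) If $\lvert q\rvert>1$, then $\mathrm{Exp}_{s,t}(z)=\prod_{k=0}^\infty\Big(1-(\varphi_{s,t}-\varphi'_{s,t})\frac{\varphi_{s,t}^{k}}{\varphi_{s,t}'^{\,k+1}}z\Big)$.
   Context: $\varphi_{s,t}=\frac{s+\sqrt{s^2+4t}}{2}$, $\varphi'_{s,t}=\frac{s-\sqrt{s^2+4t}}{2}$. Generalized Fibonacci polynomials: $\{0\}_{s,t}=0$, $\{1\}_{s,t}=1$, $\{n+2\}_{s,t}=s\{n+1\}_{s,t}+t\{n\}_{s,t}$; Fibotorial $\{n\}_{s,t}!=\prod_{k=1}^n\{k\}_{s,t}$, $\{0\}_{s,t}!=1$. $\mathrm{Exp}_{s,t}(z)=\sum_{n=0}^\infty\varphi_{s,t}^{\binom n2}\frac{z^n}{\{n\}_{s,t}!}$. *)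

theory Defs
  imports "HOL-Complex_Analysis.Complex_Analysis"
begin

definition phi :: "real \<Rightarrow> real \<Rightarrow> real" where
  "phi s t = (s + sqrt (s\<^sup>2 + 4 * t)) / 2"

definition phi' :: "real \<Rightarrow> real \<Rightarrow> real" where
  "phi' s t = (s - sqrt (s\<^sup>2 + 4 * t)) / 2"

fun gfib :: "real \<Rightarrow> real \<Rightarrow> nat \<Rightarrow> real" where
  "gfib s t 0 = 0"
| "gfib s t (Suc 0) = 1"
| "gfib s t (Suc (Suc n)) = s * gfib s t (Suc n) + t * gfib s t n"

definition fibotorial :: "real \<Rightarrow> real \<Rightarrow> nat \<Rightarrow> real" where
  "fibotorial s t n = (\<Prod>k = 1..n. gfib s t k)"

definition Exp_coeff :: "real \<Rightarrow> real \<Rightarrow> nat \<Rightarrow> complex" where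
  "Exp_coeff s t n = complex_of_real (phi s t ^ (n choose 2) / fibotorial s t n)"

definition Exp_st :: "real \<Rightarrow> real \<Rightarrow> complex \<Rightarrow> complex" where
  "Exp_st s t z = (\<Sum>n. Exp_coeff s t n * z ^ n)"

end

theory Submission
  imports Defs
begin



lemma basic_facts:
  fixes s t :: real
  assumes "t \<noteq> 0" "s\<^sup>2 + 4 * t > 0"
  shows "phi s t - phi' s t > 0" "phi s t + phi' s t = s" "phi s t * phi' s t = - t"
    "phi s t \<noteq> 0" "phi' s t \<noteq> 0"
proof -
  have D: "sqrt (s\<^sup>2 + 4 * t) > 0" using assms by simp
  have sq: "sqrt (s\<^sup>2 + 4 * t) ^ 2 = s\<^sup>2 + 4 * t" using assms by simp
  show "phi s t - phi' s t > 0" using D by (simp add: phi_def phi'_def)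
  show "phi s t + phi' s t = s" by (simp add: phi_def phi'_def field_simps)
  show pr: "phi s t * phi' s t = - t" unfolding phi_def phi'_def
    using sq by (simp add: field_simps power2_eq_square)
  show "phi s t \<noteq> 0" "phi' s t \<noteq> 0" using pr assms(1) by auto
qed

lemma binet:
  fixes s t a b :: real
  assumes "a + b = s" "a * b = - t" "a \<noteq> b"
  shows "gfib s t n = (a^n - b^n) / (a - b)"
proof -
  have "gfib s t n = (a^n - b^n) / (a - b) \<and> gfib s t (Suc n) = (a^Suc n - b^Suc n) / (a - b)"
  proof (induction n)
    case 0 then show ?case using assms by simp
  next
    case (Suc n)
    have "gfib s t (Suc (Suc n)) = s * gfib s t (Suc n) + t * gfib s t n" by simp
    also have "\<dots> = (a + b) * ((a^Suc n - b^Suc n) / (a - b)) + (-(a*b)) * ((a^n - b^n) / (a - b))"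
      using Suc assms(1,2) by (metis add.inverse_inverse)
    also have "\<dots> = ((a + b) * (a^Suc n - b^Suc n) + (-(a*b)) * (a^n - b^n)) / (a - b)"
      by (simp only: times_divide_eq_right add_divide_distrib[symmetric])
    also have "(a + b) * (a^Suc n - b^Suc n) + (-(a*b)) * (a^n - b^n) = a^Suc (Suc n) - b^Suc (Suc n)"
      by (simp add: algebra_simps)
    finally show ?case using Suc by simp
  qed
  then show ?thesis by simp
qed

lemma pow_ne_of_abs_ne:
  fixes a b :: real
  assumes "\<bar>a\<bar> \<noteq> \<bar>b\<bar>" "k > 0"
  shows "a ^ k \<noteq> b ^ k"
proof
  assume "a ^ k = b ^ k"
  then have "\<bar>a\<bar> ^ k = \<bar>b\<bar> ^ k" by (metis power_abs)
  then have "\<bar>a\<bar> = \<bar>b\<bar>" using assms(2) by (meson abs_ge_zero power_eq_imp_eq_base)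
  then show False using assms(1) by simp
qed

lemma alg_helper:
  fixes P A F X d :: real
  assumes "X \<noteq> 0" "F \<noteq> 0" "d > 0"
  shows "P * A / (F * (X / d)) * X = d * A * (P / F)"
  using assms by (simp add: field_simps)

lemma coeff_rec:
  fixes s t :: real
  defines "a \<equiv> phi s t" and "b \<equiv> phi' s t"
  assumes "t \<noteq> 0" "s\<^sup>2 + 4 * t > 0" "\<bar>a\<bar> \<noteq> \<bar>b\<bar>"
  shows "Exp_coeff s t 0 = 1" and "Exp_coeff s t n \<noteq> 0"
    and "Exp_coeff s t (Suc n) * of_real (a^Suc n - b^Suc n) = of_real ((a-b)*a^n) * Exp_coeff s t n"
proof -
  note bf = basic_facts[OF assms(3,4), folded a_def b_def]
  have g: "gfib s t k = (a^k - b^k) / (a - b)" for k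
    using binet[of a b s t k] bf by auto
  have gnz: "gfib s t k \<noteq> 0" if "k > 0" for k
    using g[of k] bf(1) pow_ne_of_abs_ne[OF assms(5) that] by auto
  have fnz: "fibotorial s t n \<noteq> 0"
    unfolding fibotorial_def using gnz by (auto simp: prod_zero_iff)
  have fS: "fibotorial s t (Suc n) = fibotorial s t n * gfib s t (Suc n)"
    unfolding fibotorial_def by (simp add: prod.cl_ivl_Suc)
  have C: "Suc n choose 2 = (n choose 2) + n" by (simp add: numeral_2_eq_2)
  have nz2: "a^Suc n - b^Suc n \<noteq> 0" using pow_ne_of_abs_ne[OF assms(5), of "Suc n"] by simp
  have E: "a^(Suc n choose 2) / fibotorial s t (Suc n) * (a^Suc n - b^Suc n)
      = (a-b)*a^n * (a^(n choose 2) / fibotorial s t n)"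
    unfolding fS C g[of "Suc n"] power_add using fnz nz2 bf(1) alg_helper by simp
  show "Exp_coeff s t (Suc n) * of_real (a^Suc n - b^Suc n) = of_real ((a-b)*a^n) * Exp_coeff s t n"
    using E unfolding Exp_coeff_def a_def b_def by (simp only: of_real_mult[symmetric])
  show "Exp_coeff s t 0 = 1" by (simp add: Exp_coeff_def fibotorial_def numeral_2_eq_2)
  show "Exp_coeff s t n \<noteq> 0" using fnz bf(4) unfolding Exp_coeff_def a_def by simp
qed



lemma powser_fe:
  fixes c :: "nat \<Rightarrow> complex" and r \<gamma> \<alpha> w :: complex
  assumes rec: "\<And>n. c (Suc n) * (1 - r^Suc n) = \<alpha> * \<gamma>^n * c n"
    and s1: "summable (\<lambda>n. c n * w^n)" and s2: "summable (\<lambda>n. c n * (r*w)^n)"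
    and s3: "summable (\<lambda>n. c n * (\<gamma>*w)^n)"
  shows "(\<Sum>n. c n * w^n) - (\<Sum>n. c n * (r*w)^n) = \<alpha> * w * (\<Sum>n. c n * (\<gamma>*w)^n)"
proof -
  define g where "g n = c n * (1 - r^n) * w^n" for n
  have "(\<lambda>n. c n * w^n - c n * (r*w)^n) sums ((\<Sum>n. c n * w^n) - (\<Sum>n. c n * (r*w)^n))"
    using s1 s2 by (intro sums_diff summable_sums)
  moreover have "(\<lambda>n. c n * w^n - c n * (r*w)^n) = g"
    by (auto simp: g_def algebra_simps power_mult_distrib)
  ultimately have A: "g sums ((\<Sum>n. c n * w^n) - (\<Sum>n. c n * (r*w)^n))" by simp
  have "(\<lambda>n. g (Suc n)) = (\<lambda>n. \<alpha> * w * (c n * (\<gamma>*w)^n))"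
  proof
    fix n
    have "g (Suc n) = (c (Suc n) * (1 - r^Suc n)) * w^Suc n" by (simp add: g_def)
    also have "\<dots> = \<alpha> * w * (c n * (\<gamma>*w)^n)" unfolding rec by (simp add: power_mult_distrib mult_ac)
    finally show "g (Suc n) = \<alpha> * w * (c n * (\<gamma>*w)^n)" .
  qed
  moreover have "(\<lambda>n. \<alpha> * w * (c n * (\<gamma>*w)^n)) sums (\<alpha> * w * (\<Sum>n. c n * (\<gamma>*w)^n))"
    using s3 by (intro sums_mult summable_sums)
  ultimately have "(\<lambda>n. g (Suc n)) sums (\<alpha> * w * (\<Sum>n. c n * (\<gamma>*w)^n))" by simp
  then have "g sums (\<alpha> * w * (\<Sum>n. c n * (\<gamma>*w)^n) + g 0)" by (simp add: sums_Suc_iff)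
  then have B: "g sums (\<alpha> * w * (\<Sum>n. c n * (\<gamma>*w)^n))" by (simp add: g_def)
  show ?thesis using A B sums_unique2 by blast
qed

lemma iter_prod:
  fixes f h :: "complex \<Rightarrow> complex" and r z :: complex
  assumes "\<And>k. f (r^k * z) = h (r^k * z) * f (r^Suc k * z)"
  shows "f z = (\<Prod>k<N. h (r^k*z)) * f (r^N * z)"
proof (induction N)
  case 0 then show ?case by simp
next
  case (Suc N)
  then show ?case using assms[of N] by (simp add: mult.assoc)
qed

lemma iter_has_prod:
  fixes f h :: "complex \<Rightarrow> complex" and r z :: complex
  assumes eq: "\<And>k. f (r^k * z) = h (r^k * z) * f (r^Suc k * z)"
    and lim: "(\<lambda>N. f (r^N*z)) \<longlonglongrightarrow> 1" and cp: "convergent_prod (\<lambda>k. h (r^k*z))"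
  shows "(\<lambda>k. h (r^k*z)) has_prod f z"
proof -
  define H where "H = (\<lambda>k. h (r^k*z))"
  have "(\<lambda>n. \<Prod>k\<le>n. H k) \<longlonglongrightarrow> prodinf H"
    using convergent_prod_LIMSEQ[of H] cp by (simp add: H_def)
  then have "(\<lambda>n. \<Prod>k<Suc n. H k) \<longlonglongrightarrow> prodinf H"
    by (simp only: lessThan_Suc_atMost)
  then have P: "(\<lambda>n. \<Prod>k<n. H k) \<longlonglongrightarrow> prodinf H"
    by (rule LIMSEQ_imp_Suc[where f="\<lambda>n. \<Prod>k<n. H k"])
  have "(\<lambda>n. (\<Prod>k<n. H k) * f (r^n*z)) \<longlonglongrightarrow> prodinf H * 1"
    by (intro tendsto_mult P lim)
  moreover have "(\<lambda>n. (\<Prod>k<n. H k) * f (r^n*z)) = (\<lambda>n. f z)"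
    unfolding H_def using iter_prod[of f r z h, OF eq] by (intro ext) (rule sym)
  ultimately have "(\<lambda>n. f z) \<longlonglongrightarrow> prodinf H" by simp
  then have "f z = prodinf H" by (rule LIMSEQ_unique[OF tendsto_const])
  then show ?thesis using convergent_prod_has_prod[of H] cp by (simp add: H_def)
qed



lemma inv_bound:
  fixes u :: complex
  assumes "norm u < 1/2"
  shows "norm (1/(1-u) - 1) \<le> 2 * norm u"
proof -
  have n1: "norm (1 - u) \<ge> 1 - norm u" using norm_triangle_ineq2[of 1 u] by simp
  then have pos: "norm (1 - u) > 1/2" using assms by linarith
  then have nz: "1 - u \<noteq> 0" by auto
  have "1/(1-u) - 1 = u / (1 - u)" using nz by (simp add: field_simps)
  then have "norm (1/(1-u) - 1) = norm u / norm (1 - u)" by (simp add: norm_divide)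
  also have "\<dots> \<le> norm u / (1/2)" using pos by (intro divide_left_mono) auto
  finally show ?thesis by simp
qed

lemma geo_summable:
  fixes r :: complex and C :: real
  assumes "norm r < 1"
  shows "summable (\<lambda>k. C * norm r ^ k)"
  using assms by (intro summable_mult summable_geometric) auto

lemma cp_inv:
  fixes \<alpha> r z :: complex
  assumes "norm r < 1"
  shows "convergent_prod (\<lambda>k. 1/(1 - \<alpha>*(r^k*z)))"
proof -
  have "(\<lambda>k. r^k) \<longlonglongrightarrow> 0" using assms by (rule LIMSEQ_power_zero)
  then have "(\<lambda>k. \<alpha>*(r^k*z)) \<longlonglongrightarrow> 0"
    by (intro tendsto_mult_right_zero tendsto_mult_left_zero)
  then have ev: "eventually (\<lambda>k. norm (\<alpha>*(r^k*z)) < 1/2) sequentially"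
    unfolding tendsto_iff dist_norm by (metis (no_types, lifting) diff_zero eventually_mono half_gt_zero_iff zero_less_one)
  have "eventually (\<lambda>k. norm (norm (1/(1 - \<alpha>*(r^k*z)) - 1)) \<le> 2 * (norm \<alpha> * norm z) * norm r ^ k) sequentially"
    using ev
  proof eventually_elim
    case (elim k)
    then have "norm (1/(1 - \<alpha>*(r^k*z)) - 1) \<le> 2 * norm (\<alpha>*(r^k*z))" by (rule inv_bound)
    also have "\<dots> = 2 * (norm \<alpha> * norm z) * norm r ^ k" by (simp add: norm_mult norm_power)
    finally show ?case by simp
  qed
  then have "summable (\<lambda>k. norm (1/(1 - \<alpha>*(r^k*z)) - 1))"
    by (rule summable_comparison_test_ev) (rule geo_summable[OF assms])
  then show ?thesis
    by (intro abs_convergent_prod_imp_convergent_prod) (simp add: abs_convergent_prod_conv_summable)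
qed

lemma cp_lin:
  fixes \<alpha> r z :: complex
  assumes "norm r < 1"
  shows "convergent_prod (\<lambda>k. 1 + \<alpha>*(r^k*z))"
proof -
  have "summable (\<lambda>k. (norm \<alpha> * norm z) * norm r ^ k)" by (rule geo_summable[OF assms])
  then have "summable (\<lambda>k. norm ((1 + \<alpha>*(r^k*z)) - 1))" by (simp add: norm_mult norm_power mult_ac)
  then show ?thesis
    by (intro abs_convergent_prod_imp_convergent_prod) (simp add: abs_convergent_prod_conv_summable)
qed




lemma ratio_helper:
  fixes N0 N1 X D :: real
  assumes "N1 * X = D * N0" "N1 \<noteq> 0" "D \<noteq> 0"
  shows "N0 / N1 = X / D"
  using assms by (simp add: field_simps)

lemma case1_radius:
  fixes s t :: real
  defines "a \<equiv> phi s t" and "b \<equiv> phi' s t"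
  assumes "t \<noteq> 0" "s\<^sup>2 + 4 * t > 0" "\<bar>b\<bar> < \<bar>a\<bar>"
  shows "conv_radius (Exp_coeff s t) = ereal (\<bar>a\<bar> / (a - b))"
proof -
  note bf = basic_facts[OF assms(3,4), folded a_def b_def]
  have ne: "\<bar>a\<bar> \<noteq> \<bar>b\<bar>" using assms(5) by simp
  note cr = coeff_rec[OF assms(3,4), folded a_def b_def, OF ne]
  have ratio: "norm (Exp_coeff s t n) / norm (Exp_coeff s t (Suc n)) = \<bar>a\<bar> * \<bar>1 - (b/a)^Suc n\<bar> / (a - b)" for n
  proof -
    have "norm (Exp_coeff s t (Suc n) * of_real (a^Suc n - b^Suc n)) = norm (of_real ((a-b)*a^n) * Exp_coeff s t n)"
      using cr(3)[of n] by simp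
    then have e0: "norm (Exp_coeff s t (Suc n)) * \<bar>a^Suc n - b^Suc n\<bar> = \<bar>(a-b)*a^n\<bar> * norm (Exp_coeff s t n)"
      by (simp only: norm_mult norm_of_real)
    have "\<bar>(a-b)*a^n\<bar> = (a-b)*\<bar>a\<bar>^n" using bf(1) by (simp add: abs_mult power_abs)
    with e0 have e1: "norm (Exp_coeff s t (Suc n)) * \<bar>a^Suc n - b^Suc n\<bar> = ((a-b)*\<bar>a\<bar>^n) * norm (Exp_coeff s t n)"
      by simp
    have "a^Suc n - b^Suc n = a^Suc n * (1 - (b/a)^Suc n)"
      using bf(4) by (simp add: power_divide right_diff_distrib)
    then have X: "\<bar>a^Suc n - b^Suc n\<bar> = \<bar>a\<bar>^Suc n * \<bar>1 - (b/a)^Suc n\<bar>"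
      by (simp add: abs_mult power_abs)
    have "norm (Exp_coeff s t n) / norm (Exp_coeff s t (Suc n)) = \<bar>a^Suc n - b^Suc n\<bar> / ((a-b)*\<bar>a\<bar>^n)"
      by (rule ratio_helper[OF e1]) (use cr(2)[of "Suc n"] bf(1) bf(4) in auto)
    also have "\<dots> = \<bar>a\<bar> * \<bar>1 - (b/a)^Suc n\<bar> / (a - b)"
      unfolding X using bf(4) by simp
    finally show ?thesis .
  qed
  have q: "norm (b/a) < 1" using assms(5) bf(4) by (simp add: abs_divide)
  have "(\<lambda>n. (b/a)^Suc n) \<longlonglongrightarrow> 0" by (rule LIMSEQ_Suc[OF LIMSEQ_power_zero[OF q]])
  then have "(\<lambda>n. \<bar>a\<bar> * \<bar>1 - (b/a)^Suc n\<bar> / (a - b)) \<longlonglongrightarrow> \<bar>a\<bar> * \<bar>1 - 0\<bar> / (a - b)"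
    using bf(1) by (intro tendsto_intros) auto
  then have "(\<lambda>n. norm (Exp_coeff s t n) / norm (Exp_coeff s t (Suc n))) \<longlonglongrightarrow> \<bar>a\<bar> / (a - b)"
    unfolding ratio by simp
  then show ?thesis
    by (intro conv_radius_ratio_limit_nonzero[of _ "\<bar>a\<bar> / (a - b)"]) (use bf in auto)
qed

lemma diff_swap_helper:
  fixes x y z :: complex
  shows "x - y = z \<Longrightarrow> y = x - z"
  by auto

lemma Exp_st_fun: "Exp_st s t = (\<lambda>w. \<Sum>n. Exp_coeff s t n * w^n)"
  by (rule ext) (simp add: Exp_st_def)

lemma case1_prod:
  fixes s t :: real and z :: complex
  defines "a \<equiv> phi s t" and "b \<equiv> phi' s t"
  defines "R \<equiv> \<bar>a\<bar> / (a - b)" and "Q \<equiv> complex_of_real (b/a)" and "\<alpha> \<equiv> complex_of_real ((a-b)/a)"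
  assumes "t \<noteq> 0" "s\<^sup>2 + 4 * t > 0" "\<bar>b\<bar> < \<bar>a\<bar>" "norm z < R"
  shows "(\<lambda>k. 1/(1 - \<alpha>*(Q^k*z))) has_prod Exp_st s t z"
proof -
  note bf = basic_facts[OF assms(6,7), folded a_def b_def]
  have ne: "\<bar>a\<bar> \<noteq> \<bar>b\<bar>" using assms(8) by simp
  note cr = coeff_rec[OF assms(6,7), folded a_def b_def, OF ne]
  have rad: "conv_radius (Exp_coeff s t) = ereal R"
    using case1_radius[OF assms(6,7)] assms(8) unfolding R_def a_def b_def by simp
  have Rpos: "R > 0" using bf unfolding R_def by auto
  have "norm Q = \<bar>b\<bar> / \<bar>a\<bar>" by (simp only: Q_def norm_of_real abs_divide)
  then have Qn: "norm Q < 1" using assms(8) bf(4) by simp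
  have "norm \<alpha> = \<bar>a - b\<bar> / \<bar>a\<bar>" by (simp only: \<alpha>_def norm_of_real abs_divide)
  then have na: "norm \<alpha> * R = 1" using bf(1) bf(4) by (simp add: R_def)
  define c where "c = Exp_coeff s t"
  have rec1: "c (Suc n) * (1 - Q^Suc n) = \<alpha> * 1^n * c n" for n
  proof -
    define A where "A = complex_of_real (a^Suc n)"
    have A0: "A \<noteq> 0" using bf(4) by (simp add: A_def)
    have r1: "1 - (b/a)^Suc n = (a^Suc n - b^Suc n) / a^Suc n"
      using bf(4) by (simp add: power_divide diff_divide_distrib)
    have "1 - Q^Suc n = complex_of_real (1 - (b/a)^Suc n)" by (simp add: Q_def)
    also have "\<dots> = complex_of_real (a^Suc n - b^Suc n) / A" unfolding r1 A_def by simp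
    finally have e1: "1 - Q^Suc n = complex_of_real (a^Suc n - b^Suc n) / A" .
    have r2: "(a-b)/a = (a-b)*a^n / a^Suc n" using bf(4) by simp
    have e2: "\<alpha> = complex_of_real ((a-b)*a^n) / A" unfolding \<alpha>_def A_def r2 by simp
    have "c (Suc n) * (1 - Q^Suc n) = (c (Suc n) * complex_of_real (a^Suc n - b^Suc n)) / A"
      unfolding e1 by simp
    also have "\<dots> = (complex_of_real ((a-b)*a^n) * c n) / A" unfolding c_def cr(3) ..
    also have "\<dots> = \<alpha> * 1^n * c n" unfolding e2 by simp
    finally show ?thesis .
  qed
  have summ: "summable (\<lambda>n. c n * w^n)" if "norm w < R" for w
    unfolding c_def by (rule summable_in_conv_radius) (use that rad in simp)
  define f where "f = Exp_st s t"
  have f_eq: "f = (\<lambda>w. \<Sum>n. c n * w^n)" unfolding f_def c_def by (rule Exp_st_fun)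
  define h where "h = (\<lambda>w::complex. 1/(1 - \<alpha>*w))"
  have fe: "f w = h w * f (Q*w)" if w: "norm w < R" for w
  proof -
    have "norm (Q*w) \<le> norm w" using Qn by (simp add: norm_mult mult_left_le_one_le)
    then have nQw: "norm (Q*w) < R" using w by linarith
    have "f w - f (Q*w) = \<alpha> * w * f (1*w)"
      unfolding f_eq by (rule powser_fe[OF rec1 summ[OF w] summ[OF nQw]]) (use summ[OF w] in simp)
    then have e0: "f (Q*w) = f w - \<alpha> * w * f w" by (intro diff_swap_helper) simp
    have e: "f w * (1 - \<alpha>*w) = f (Q*w)" unfolding e0 by (simp add: right_diff_distrib mult_ac)
    have "norm \<alpha> > 0" using na Rpos by (metis mult_zero_left norm_ge_zero order_le_less zero_neq_one)
    then have "norm \<alpha> * norm w < norm \<alpha> * R" by (rule mult_strict_left_mono[OF w])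
    then have "norm (\<alpha>*w) < 1" using na by (simp add: norm_mult)
    then have nz: "1 - \<alpha>*w \<noteq> 0" by auto
    have "f w = f (Q*w) / (1 - \<alpha>*w)" using e nz by (simp add: eq_divide_eq)
    then show ?thesis by (simp add: h_def)
  qed
  have eq: "f (Q^k * z) = h (Q^k * z) * f (Q^Suc k * z)" for k
  proof -
    have "norm (Q^k*z) \<le> norm z" using Qn
      by (simp add: norm_mult norm_power mult_left_le_one_le power_le_one)
    then have "norm (Q^k*z) < R" using assms(9) by linarith
    from fe[OF this] show ?thesis by (simp add: mult.assoc)
  qed
  have ic: "isCont f 0"
  proof -
    have "summable (\<lambda>n. c n * complex_of_real (R/2) ^ n)" using Rpos by (intro summ) simp
    then show ?thesis unfolding f_eq by (rule isCont_powser) (use Rpos in simp)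
  qed
  have f0: "f 0 = 1" unfolding f_eq using cr(1) by (simp add: c_def)
  have "(\<lambda>N. Q^N*z) \<longlonglongrightarrow> 0" by (intro tendsto_mult_left_zero LIMSEQ_power_zero Qn)
  then have lim: "(\<lambda>N. f (Q^N*z)) \<longlonglongrightarrow> 1"
    using isCont_tendsto_compose[OF ic] f0 by force
  have cp: "convergent_prod (\<lambda>k. h (Q^k*z))" unfolding h_def by (rule cp_inv[OF Qn])
  have "(\<lambda>k. h (Q^k*z)) has_prod f z" by (rule iter_has_prod[of f Q z h, OF eq lim cp])
  then show ?thesis by (simp add: h_def f_def)
qed



lemma case2_prod:
  fixes s t :: real and z :: complex
  defines "a \<equiv> phi s t" and "b \<equiv> phi' s t"
  defines "P \<equiv> complex_of_real (a/b)" and "\<beta> \<equiv> complex_of_real (1 - a/b)"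
  assumes "t \<noteq> 0" "s\<^sup>2 + 4 * t > 0" "\<bar>a\<bar> < \<bar>b\<bar>"
  shows "(\<lambda>k. 1 + \<beta>*(P^k*z)) has_prod Exp_st s t z"
proof -
  note bf = basic_facts[OF assms(5,6), folded a_def b_def]
  have ne: "\<bar>a\<bar> \<noteq> \<bar>b\<bar>" using assms(7) by simp
  note cr = coeff_rec[OF assms(5,6), folded a_def b_def, OF ne]
  have "norm P = \<bar>a\<bar> / \<bar>b\<bar>" by (simp only: P_def norm_of_real abs_divide)
  then have Pn: "norm P < 1" using assms(7) bf(5) by simp
  define c where "c = Exp_coeff s t"
  have rec2: "c (Suc n) * (1 - P^Suc n) = \<beta> * P^n * c n" for n
  proof -
    define B where "B = complex_of_real (b^Suc n)"
    have B0: "B \<noteq> 0" using bf(5) by (simp add: B_def)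
    have r1: "1 - (a/b)^Suc n = - (a^Suc n - b^Suc n) / b^Suc n"
      using bf(5) by (simp add: power_divide diff_divide_distrib)
    have "1 - P^Suc n = complex_of_real (1 - (a/b)^Suc n)" by (simp add: P_def)
    also have "\<dots> = - complex_of_real (a^Suc n - b^Suc n) / B" unfolding r1 B_def by simp
    finally have e1: "1 - P^Suc n = - complex_of_real (a^Suc n - b^Suc n) / B" .
    have r2: "(1 - a/b) * (a/b)^n = - ((a-b)*a^n) / b^Suc n"
      using bf(5) by (simp add: power_divide field_simps)
    have "\<beta> * P^n = complex_of_real ((1 - a/b) * (a/b)^n)" by (simp add: \<beta>_def P_def)
    also have "\<dots> = - complex_of_real ((a-b)*a^n) / B" unfolding r2 B_def by simp
    finally have e2: "\<beta> * P^n = - complex_of_real ((a-b)*a^n) / B" .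
    have "c (Suc n) * (1 - P^Suc n) = - (c (Suc n) * complex_of_real (a^Suc n - b^Suc n)) / B"
      unfolding e1 by (simp only: times_divide_eq_right mult_minus_right)
    also have "\<dots> = - (complex_of_real ((a-b)*a^n) * c n) / B" unfolding c_def cr(3) ..
    also have "\<dots> = \<beta> * P^n * c n" unfolding e2 by simp
    finally show ?thesis .
  qed
  define m where "m = 1 - norm P"
  have m0: "m > 0" using Pn by (simp add: m_def)
  have summ: "summable (\<lambda>n. c n * w^n)" for w
  proof -
    define K where "K = norm \<beta> * norm w / m"
    have "(\<lambda>n. K * norm P ^ n) \<longlonglongrightarrow> K * 0"
      by (intro tendsto_intros LIMSEQ_power_zero) (use Pn in simp)
    then have "eventually (\<lambda>n. K * norm P ^ n < 1/2) sequentially"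
      by (intro order_tendstoD) auto
    then obtain N where N: "\<And>n. n \<ge> N \<Longrightarrow> K * norm P ^ n < 1/2"
      by (auto simp: eventually_sequentially)
    show ?thesis
    proof (rule summable_ratio_test[of "1/2" N])
      fix n assume n: "n \<ge> N"
      have "norm (1 - P^Suc n) \<ge> 1 - norm (P^Suc n)" using norm_triangle_ineq2[of 1 "P^Suc n"] by simp
      moreover have "norm (P^Suc n) \<le> norm P"
      proof -
        have "norm P ^ n \<le> 1" using Pn by (simp add: power_le_one)
        then have "norm P * norm P ^ n \<le> norm P * 1" by (intro mult_left_mono) auto
        then show ?thesis by (simp add: norm_power norm_mult)
      qed
      ultimately have lb: "norm (1 - P^Suc n) \<ge> m" by (simp add: m_def)
      have "norm (c (Suc n)) * norm (1 - P^Suc n) = norm \<beta> * norm P ^ n * norm (c n)"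
        using arg_cong[OF rec2[of n], of norm] by (simp add: norm_mult norm_power)
      then have "norm (c (Suc n)) * m \<le> norm \<beta> * norm P ^ n * norm (c n)"
        by (metis lb mult_left_mono norm_ge_zero)
      then have cb: "norm (c (Suc n)) \<le> norm \<beta> * norm P ^ n * norm (c n) / m"
        using m0 by (simp add: le_divide_eq)
      have "norm (c (Suc n) * w ^ Suc n) = norm (c (Suc n)) * norm w * norm w ^ n"
        by (simp add: norm_mult norm_power)
      also have "\<dots> \<le> (norm \<beta> * norm P ^ n * norm (c n) / m) * norm w * norm w ^ n"
        by (intro mult_right_mono cb) auto
      also have "\<dots> = (K * norm P ^ n) * norm (c n * w ^ n)"
        by (simp add: K_def norm_mult norm_power)
      also have "\<dots> \<le> 1/2 * norm (c n * w ^ n)"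
        using N[OF n] by (intro mult_right_mono) auto
      finally show "norm (c (Suc n) * w ^ Suc n) \<le> 1/2 * norm (c n * w ^ n)" .
    qed simp
  qed
  define f where "f = Exp_st s t"
  have f_eq: "f = (\<lambda>w. \<Sum>n. c n * w^n)" unfolding f_def c_def by (rule Exp_st_fun)
  define h where "h = (\<lambda>w::complex. 1 + \<beta>*w)"
  have fe: "f w = h w * f (P*w)" for w
  proof -
    have "f w - f (P*w) = \<beta> * w * f (P*w)"
      unfolding f_eq by (rule powser_fe[OF rec2 summ summ summ])
    then have "f w = f (P*w) + \<beta> * w * f (P*w)" by (simp add: diff_eq_eq)
    then show ?thesis by (simp add: h_def distrib_right)
  qed
  have eq: "f (P^k * z) = h (P^k * z) * f (P^Suc k * z)" for k
    using fe[of "P^k*z"] by (simp add: mult.assoc)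
  have ic: "isCont f 0" unfolding f_eq by (rule isCont_powser_converges_everywhere) (rule summ)
  have f0: "f 0 = 1" unfolding f_eq using cr(1) by (simp add: c_def)
  have "(\<lambda>N. P^N*z) \<longlonglongrightarrow> 0" by (intro tendsto_mult_left_zero LIMSEQ_power_zero Pn)
  then have lim: "(\<lambda>N. f (P^N*z)) \<longlonglongrightarrow> 1"
    using isCont_tendsto_compose[OF ic] f0 by force
  have cp: "convergent_prod (\<lambda>k. h (P^k*z))" unfolding h_def by (rule cp_lin[OF Pn])
  have "(\<lambda>k. h (P^k*z)) has_prod f z" by (rule iter_has_prod[of f P z h, OF eq lim cp])
  then show ?thesis by (simp add: h_def f_def)
qed



lemma Exp_st_eval_fps: "Exp_st s t = eval_fps (Abs_fps (Exp_coeff s t))"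
  by (rule ext) (simp add: Exp_st_def eval_fps_def)

lemma case1_mero:
  fixes s t :: real
  defines "a \<equiv> phi s t" and "b \<equiv> phi' s t"
  defines "R \<equiv> \<bar>a\<bar> / (a - b)" and "Q \<equiv> complex_of_real (b/a)" and "\<alpha> \<equiv> complex_of_real ((a-b)/a)"
  assumes "t \<noteq> 0" "s\<^sup>2 + 4 * t > 0" "\<bar>b\<bar> < \<bar>a\<bar>"
  shows "(\<lambda>z. \<Prod>k. 1/(1 - \<alpha>*(Q^k*z))) meromorphic_on UNIV"
proof -
  note bf = basic_facts[OF assms(6,7), folded a_def b_def]
  have cprod: "(\<lambda>k. 1/(1 - \<alpha>*(Q^k*z))) has_prod Exp_st s t z" if "norm z < R" for z
    using case1_prod[OF assms(6,7) _ that[unfolded R_def a_def b_def]] assms(8)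
    unfolding a_def b_def Q_def \<alpha>_def by simp
  have rad: "conv_radius (Exp_coeff s t) = ereal R"
    using case1_radius[OF assms(6,7)] assms(8) unfolding R_def a_def b_def by simp
  have "norm Q = \<bar>b\<bar> / \<bar>a\<bar>" by (simp only: Q_def norm_of_real abs_divide)
  then have Qn: "norm Q < 1" using assms(8) bf(4) by simp
  define h where "h = (\<lambda>w::complex. 1/(1 - \<alpha>*w))"
  define F where "F = (\<lambda>z. \<Prod>k. h (Q^k*z))"
  define f where "f = Exp_st s t"
  have "F meromorphic_on {z0}" for z0
  proof -
    have "(\<lambda>N. norm Q ^ N * (norm z0 + 1)) \<longlonglongrightarrow> 0 * (norm z0 + 1)"
      by (intro tendsto_intros LIMSEQ_power_zero) (use Qn in simp)
    moreover have "R > 0" using bf unfolding R_def by auto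
    ultimately have "eventually (\<lambda>N. norm Q ^ N * (norm z0 + 1) < R) sequentially"
      by (intro order_tendstoD) auto
    then obtain N where N: "norm Q ^ N * (norm z0 + 1) < R"
      by (auto simp: eventually_sequentially)
    define G where "G = (\<lambda>z. (\<Prod>k<N. h (Q^k*z)) * f (Q^N*z))"
    have FG: "F z = G z" if z: "z \<in> ball z0 1" for z
    proof -
      define w where "w = Q^N*z"
      have "norm z \<le> norm z0 + 1" using z norm_triangle_ineq2[of z z0]
        by (simp add: dist_norm norm_minus_commute)
      then have "norm Q ^ N * norm z \<le> norm Q ^ N * (norm z0 + 1)"
        by (intro mult_left_mono) auto
      then have nw: "norm w < R" using N by (simp add: w_def norm_mult norm_power)
      have tail: "(\<lambda>i. h (Q^(i+N)*z)) has_prod f w"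
        using cprod[OF nw] by (simp add: h_def f_def w_def power_add mult_ac)
      show ?thesis
      proof (cases "\<forall>k<N. h (Q^k*z) \<noteq> 0")
        case True
        have "(\<lambda>k. h (Q^k*z)) has_prod (f w * (\<Prod>k<N. h (Q^k*z)))"
          using has_prod_iff_shift[of N "\<lambda>k. h (Q^k*z)" "f w"] True tail by simp
        then have "F z = f w * (\<Prod>k<N. h (Q^k*z))"
          unfolding F_def by (rule has_prod_unique[symmetric])
        then show ?thesis by (simp add: G_def w_def mult.commute)
      next
        case False
        then obtain k where k: "k < N" "h (Q^k*z) = 0" by auto
        have "G z = 0" using k unfolding G_def by (auto simp: prod_zero_iff)
        moreover have "F z = 0"
        proof -
          have "convergent_prod (\<lambda>k. h (Q^k*z))" unfolding h_def by (rule cp_inv[OF Qn])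
          then have "(\<lambda>k. h (Q^k*z)) has_prod F z" unfolding F_def by (rule convergent_prod_has_prod)
          then show ?thesis using k(2) by (rule has_prod_zeroI)
        qed
        ultimately show ?thesis by simp
      qed
    qed
    have "G meromorphic_on {z0}"
      unfolding G_def
    proof (intro meromorphic_on_mult meromorphic_on_prod)
      show "(\<lambda>z. h (Q^k*z)) meromorphic_on {z0}" for k
        unfolding h_def by (intro meromorphic_intros)
      have "(f \<circ> (\<lambda>z. Q^N*z)) analytic_on {z0}"
      proof (rule analytic_on_compose_gen[where T="ball 0 R"])
        show "(\<lambda>z. Q^N*z) analytic_on {z0}" by (intro analytic_intros)
        show "f analytic_on ball 0 R"
          unfolding f_def Exp_st_eval_fps by (rule analytic_on_eval_fps) (auto simp: fps_conv_radius_def rad)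
        have "norm z0 < norm z0 + 1" by simp
        then have "norm Q ^ N * norm z0 \<le> norm Q ^ N * (norm z0 + 1)"
          by (intro mult_left_mono) auto
        then show "Q^N*z \<in> ball 0 R" if "z \<in> {z0}" for z
          using that N by (simp add: norm_mult norm_power)
      qed
      then show "(\<lambda>z. f (Q^N*z)) meromorphic_on {z0}"
        by (intro analytic_on_imp_meromorphic_on) (simp add: o_def)
    qed
    moreover have "eventually (\<lambda>z. F z = G z) (at z0)"
      using eventually_at_in_open'[of "ball z0 1" z0] by (auto elim!: eventually_mono intro: FG)
    ultimately show ?thesis
      using meromorphic_on_cong[of "{z0}" F G "{z0}"] by auto
  qed
  then have "F meromorphic_on UNIV" using meromorphic_on_meromorphic_at by blast
  then show ?thesis by (simp add: F_def h_def)
qed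



lemma fac_eq1:
  fixes a b :: real and z :: complex
  assumes "a \<noteq> 0"
  shows "complex_of_real (a ^ (k + 1)) /
           (complex_of_real (a ^ (k + 1)) - complex_of_real ((a - b) * b ^ k) * z)
       = 1/(1 - complex_of_real ((a-b)/a) * (complex_of_real (b/a)^k * z))"
proof -
  define A where "A = complex_of_real (a ^ (k + 1))"
  have A0: "A \<noteq> 0" using assms by (simp add: A_def)
  have r: "(a-b)/a * (b/a)^k = (a-b)*b^k / a^(k+1)" using assms by (simp add: power_divide)
  have "complex_of_real ((a-b)/a) * (complex_of_real (b/a)^k * z)
      = complex_of_real ((a-b)/a * (b/a)^k) * z" by simp
  also have "\<dots> = complex_of_real ((a - b) * b ^ k) * z / A" unfolding r A_def by simp
  finally have e: "1 - complex_of_real ((a-b)/a) * (complex_of_real (b/a)^k * z)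
       = (A - complex_of_real ((a - b) * b ^ k) * z) / A"
    using A0 by (simp add: diff_divide_distrib)
  show ?thesis unfolding e A_def[symmetric] by simp
qed

lemma fac_eq2:
  fixes a b :: real and z :: complex
  assumes "b \<noteq> 0"
  shows "1 - complex_of_real ((a - b) * (a ^ k / b ^ (k + 1))) * z
       = 1 + complex_of_real (1 - a/b) * (complex_of_real (a/b)^k * z)"
proof -
  have r: "- ((a - b) * (a ^ k / b ^ (k + 1))) = (1 - a/b) * (a/b)^k"
    using assms by (simp add: power_divide field_simps)
  have "complex_of_real (1 - a/b) * (complex_of_real (a/b)^k * z)
      = complex_of_real ((1 - a/b) * (a/b)^k) * z" by simp
  also have "\<dots> = - (complex_of_real ((a - b) * (a ^ k / b ^ (k + 1))) * z)"
    unfolding r[symmetric] by simp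
  finally show ?thesis by simp
qed

theorem mainTheorem9:
  fixes s t :: real
  assumes "s \<noteq> 0" and "t \<noteq> 0" and "s\<^sup>2 + 4 * t > 0"
  defines "q \<equiv> phi' s t / phi s t"
  shows
    "(\<bar>q\<bar> < 1 \<longrightarrow>
       (let fac = (\<lambda>(k::nat) (z::complex).
                    complex_of_real (phi s t ^ (k + 1)) /
                    (complex_of_real (phi s t ^ (k + 1))
                     - complex_of_real ((phi s t - phi' s t) * phi' s t ^ k) * z));
            F = (\<lambda>z. \<Prod>k. fac k z)
        in conv_radius (Exp_coeff s t) > 0
         \<and> (\<forall>z. ereal (cmod z) < conv_radius (Exp_coeff s t) \<longrightarrow>
                (\<lambda>k. fac k z) has_prod Exp_st s t z)
         \<and> (\<forall>z. (\<forall>k. complex_of_real (phi s t ^ (k + 1))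
                     - complex_of_real ((phi s t - phi' s t) * phi' s t ^ k) * z \<noteq> 0) \<longrightarrow>
                (\<lambda>k. fac k z) has_prod F z)
         \<and> F meromorphic_on UNIV))
   \<and> (\<bar>q\<bar> > 1 \<longrightarrow>
       (\<forall>z::complex. (\<lambda>k::nat. 1 - complex_of_real ((phi s t - phi' s t) *
                        (phi s t ^ k / phi' s t ^ (k + 1))) * z) has_prod Exp_st s t z))"
proof -
  define a where "a = phi s t"
  define b where "b = phi' s t"
  note bf = basic_facts[OF assms(2,3), folded a_def b_def]
  have qa: "\<bar>q\<bar> = \<bar>b\<bar> / \<bar>a\<bar>" unfolding q_def a_def b_def by (simp add: abs_divide)
  have part1: "\<bar>b\<bar> < \<bar>a\<bar> \<Longrightarrow>
       (let fac = (\<lambda>(k::nat) (z::complex).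
                    complex_of_real (a ^ (k + 1)) /
                    (complex_of_real (a ^ (k + 1))
                     - complex_of_real ((a - b) * b ^ k) * z));
            F = (\<lambda>z. \<Prod>k. fac k z)
        in conv_radius (Exp_coeff s t) > 0
         \<and> (\<forall>z. ereal (cmod z) < conv_radius (Exp_coeff s t) \<longrightarrow>
                (\<lambda>k. fac k z) has_prod Exp_st s t z)
         \<and> (\<forall>z. (\<forall>k. complex_of_real (a ^ (k + 1))
                     - complex_of_real ((a - b) * b ^ k) * z \<noteq> 0) \<longrightarrow>
                (\<lambda>k. fac k z) has_prod F z)
         \<and> F meromorphic_on UNIV)"
  proof -
    assume lt: "\<bar>b\<bar> < \<bar>a\<bar>"
    define R where "R = \<bar>a\<bar> / (a - b)"
    define Q where "Q = complex_of_real (b/a)"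
    define \<alpha> where "\<alpha> = complex_of_real ((a-b)/a)"
    have facE: "(\<lambda>(k::nat) (z::complex).
                    complex_of_real (a ^ (k + 1)) /
                    (complex_of_real (a ^ (k + 1))
                     - complex_of_real ((a - b) * b ^ k) * z)) = (\<lambda>k z. 1/(1 - \<alpha>*(Q^k*z)))"
      unfolding \<alpha>_def Q_def using fac_eq1[OF bf(4)] by (intro ext) simp
    have rad: "conv_radius (Exp_coeff s t) = ereal R"
      using case1_radius[OF assms(2,3)] lt unfolding R_def a_def b_def by simp
    have Rpos: "R > 0" using bf unfolding R_def by auto
    have "norm Q = \<bar>b\<bar> / \<bar>a\<bar>" by (simp only: Q_def norm_of_real abs_divide)
    then have Qn: "norm Q < 1" using lt bf(4) by simp
    have c2: "(\<lambda>k. 1/(1 - \<alpha>*(Q^k*z))) has_prod Exp_st s t z" if "ereal (cmod z) < conv_radius (Exp_coeff s t)" for z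
    proof -
      have "norm z < R" using that rad by simp
      then show ?thesis
        using case1_prod[OF assms(2,3), of z] lt unfolding R_def Q_def \<alpha>_def a_def b_def by simp
    qed
    have c3: "(\<lambda>k. 1/(1 - \<alpha>*(Q^k*z))) has_prod (\<Prod>k. 1/(1 - \<alpha>*(Q^k*z)))" for z
      by (rule convergent_prod_has_prod[OF cp_inv[OF Qn]])
    have c4: "(\<lambda>z. \<Prod>k. 1/(1 - \<alpha>*(Q^k*z))) meromorphic_on UNIV"
      using case1_mero[OF assms(2,3)] lt unfolding Q_def \<alpha>_def a_def b_def by simp
    show ?thesis unfolding Let_def facE using rad Rpos c2 c3 c4 by simp
  qed
  have part2: "\<bar>a\<bar> < \<bar>b\<bar> \<Longrightarrow>
       (\<forall>z::complex. (\<lambda>k::nat. 1 - complex_of_real ((a - b) *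
                        (a ^ k / b ^ (k + 1))) * z) has_prod Exp_st s t z)"
  proof -
    assume lt: "\<bar>a\<bar> < \<bar>b\<bar>"
    show ?thesis
    proof
      fix z :: complex
      have "(\<lambda>k. 1 + complex_of_real (1 - a/b) * (complex_of_real (a/b)^k * z)) has_prod Exp_st s t z"
        using case2_prod[OF assms(2,3), of z] lt unfolding a_def b_def by simp
      then show "(\<lambda>k::nat. 1 - complex_of_real ((a - b) * (a ^ k / b ^ (k + 1))) * z) has_prod Exp_st s t z"
        unfolding fac_eq2[OF bf(5)] .
    qed
  qed
  have "\<bar>q\<bar> < 1 \<Longrightarrow> \<bar>b\<bar> < \<bar>a\<bar>" using qa bf(4) by (simp add: divide_less_eq)
  moreover have "\<bar>q\<bar> > 1 \<Longrightarrow> \<bar>a\<bar> < \<bar>b\<bar>" using qa bf(4) by (simp add: less_divide_eq)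
  ultimately show ?thesis using part1 part2 unfolding a_def b_def by blast
qed


end
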